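(* Let $X,Y,Z$ be random variables on finite alphabets $\mathcal{X},\mathcal{Y},\mathcal{Z}$. For each $y\in\mathcal{Y}$ with $\Pr(Y=y)>0$, let $(A_y,B_y,C_y)$ be the random triple on $\mathcal{X}\times\mathcal{Y}\times\mathcal{Z}$ with $$\Pr(A_y=x,B_y=y',C_y=z)=\begin{cases}0 & \text{if } \Pr(Z=z)=0,\\ \dfrac{\Pr(X=x,Y=y',Z=z)\,\Pr(Z=z\mid Y=y)}{\Pr(Z=z)} & \text{otherwise,}\end{cases}$$ and define the unique information $\operatorname{Un}(X\to Z\mid Y)=\sum_{y:\Pr(Y=y)>0}\Pr(Y=y)\,I(A_y;C_y)$. Then $$\operatorname{Un}(X\to Z\mid Y)=\sum_{y:\Pr(Y=y)>0}\Pr(Y=y)\,H(A_y)-H(X\mid Z).$$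
   Context: $H$ is Shannon entropy and $I$ is mutual information. *)

theory Defs
  imports "HOL-Probability.Probability"
begin

(* Logarithms are to base 2; the convention 0 log 0 = 0
   is built in (terms with zero mass are 0). *)

definition entropy_mf :: "('a::finite \<Rightarrow> real) \<Rightarrow> real" where
  "entropy_mf p = - (\<Sum>a\<in>UNIV. if p a = 0 then 0 else p a * log 2 (p a))"

definition marg1 :: "('a::finite \<times> 'b::finite \<Rightarrow> real) \<Rightarrow> 'a \<Rightarrow> real" where
  "marg1 p a = (\<Sum>b\<in>UNIV. p (a, b))"

definition marg2 :: "('a::finite \<times> 'b::finite \<Rightarrow> real) \<Rightarrow> 'b \<Rightarrow> real" where
  "marg2 p b = (\<Sum>a\<in>UNIV. p (a, b))"

definition mutual_info_mf :: "('a::finite \<times> 'b::finite \<Rightarrow> real) \<Rightarrow> real" where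
  "mutual_info_mf p = (\<Sum>(a, c)\<in>UNIV.
      if p (a, c) = 0 then 0 else p (a, c) * log 2 (p (a, c) / (marg1 p a * marg2 p c)))"

definition cond_entropy_mf :: "('a::finite \<times> 'b::finite \<Rightarrow> real) \<Rightarrow> real" where
  "cond_entropy_mf p = - (\<Sum>(a, c)\<in>UNIV.
      if p (a, c) = 0 then 0 else p (a, c) * log 2 (p (a, c) / marg2 p c))"

definition probY :: "('x \<times> 'y \<times> 'z) pmf \<Rightarrow> 'y \<Rightarrow> real" where
  "probY P y = pmf (map_pmf (\<lambda>(x, y, z). y) P) y"

definition probZ :: "('x \<times> 'y \<times> 'z) pmf \<Rightarrow> 'z \<Rightarrow> real" where
  "probZ P z = pmf (map_pmf (\<lambda>(x, y, z). z) P) z"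

definition probYZ :: "('x \<times> 'y \<times> 'z) pmf \<Rightarrow> 'y \<Rightarrow> 'z \<Rightarrow> real" where
  "probYZ P y z = pmf (map_pmf (\<lambda>(x, y, z). (y, z)) P) (y, z)"

definition condZ_given_Y :: "('x \<times> 'y \<times> 'z) pmf \<Rightarrow> 'z \<Rightarrow> 'y \<Rightarrow> real" where
  "condZ_given_Y P z y = probYZ P y z / probY P y"

definition massXZ :: "('x \<times> 'y \<times> 'z) pmf \<Rightarrow> 'x \<times> 'z \<Rightarrow> real" where
  "massXZ P = (\<lambda>(x, z). pmf (map_pmf (\<lambda>(x, y, z). (x, z)) P) (x, z))"

definition tripleABC :: "('x \<times> 'y \<times> 'z) pmf \<Rightarrow> 'y \<Rightarrow> 'x \<times> 'y \<times> 'z \<Rightarrow> real" where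
  "tripleABC P y = (\<lambda>(x, y', z).
      if probZ P z = 0 then 0
      else pmf P (x, y', z) * condZ_given_Y P z y / probZ P z)"

definition massAC :: "('x \<times> 'y::finite \<times> 'z) pmf \<Rightarrow> 'y \<Rightarrow> 'x \<times> 'z \<Rightarrow> real" where
  "massAC P y = (\<lambda>(x, z). \<Sum>y'\<in>UNIV. tripleABC P y (x, y', z))"

definition massA :: "('x \<times> 'y::finite \<times> 'z::finite) pmf \<Rightarrow> 'y \<Rightarrow> 'x \<Rightarrow> real" where
  "massA P y = (\<lambda>x. \<Sum>y'\<in>UNIV. \<Sum>z\<in>UNIV. tripleABC P y (x, y', z))"

definition unique_info :: "('x::finite \<times> 'y::finite \<times> 'z::finite) pmf \<Rightarrow> real" where
  "unique_info P = (\<Sum>y\<in>{y. probY P y > 0}. probY P y * mutual_info_mf (massAC P y))"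

end

theory Submission
  imports Defs
begin

lemma sum_UNIV_pair:
  "(\<Sum>u\<in>(UNIV::('a::finite\<times>'b::finite) set). f u) = (\<Sum>x\<in>UNIV. \<Sum>y\<in>UNIV. f (x,y))"
  by (subst sum.cartesian_product) (simp add: UNIV_Times_UNIV case_prod_eta)

lemma sum_UNIV_triple:
  "(\<Sum>u\<in>(UNIV::('a::finite\<times>'b::finite\<times>'c::finite) set). f u) = (\<Sum>x\<in>UNIV. \<Sum>y\<in>UNIV. \<Sum>z\<in>UNIV. f (x,y,z))"
  by (simp only: sum_UNIV_pair)

lemma pmf_map_finite:
  fixes P :: "('a::finite) pmf"
  shows "pmf (map_pmf f P) a = (\<Sum>u\<in>UNIV. if f u = a then pmf P u else 0)"
proof -
  have "pmf (map_pmf f P) a = measure P (f -` {a})" by (simp add: pmf_map)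
  also have "\<dots> = sum (pmf P) (f -` {a})" by (simp add: measure_measure_pmf_finite)
  also have "\<dots> = (\<Sum>u\<in>UNIV. if f u = a then pmf P u else 0)"
    by (simp add: sum.If_cases vimage_def Collect_conv_if Int_def)
  finally show ?thesis .
qed

context
  fixes P :: "('x::finite \<times> 'y::finite \<times> 'z::finite) pmf"
begin

lemma if_conj0: "(if a \<and> b then (p::real) else 0) = (if a then (if b then p else 0) else 0)" by simp

lemma sum_if_const: "(\<Sum>z\<in>A. if c then g z else (0::real)) = (if c then (\<Sum>z\<in>A. g z) else 0)" by simp

lemma pY_eq: "probY P y = (\<Sum>x\<in>UNIV. \<Sum>z\<in>UNIV. pmf P (x,y,z))"
  unfolding probY_def pmf_map_finite sum_UNIV_triple
  by (simp only: case_prod_conv sum_if_const sum.delta sum.delta' finite UNIV_I if_True)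

lemma pZ_eq: "probZ P z = (\<Sum>x\<in>UNIV. \<Sum>y\<in>UNIV. pmf P (x,y,z))"
  unfolding probZ_def pmf_map_finite sum_UNIV_triple
  by simp

lemma pYZ_eq: "probYZ P y z = (\<Sum>x\<in>UNIV. pmf P (x,y,z))"
  unfolding probYZ_def pmf_map_finite sum_UNIV_triple
  by (simp only: case_prod_conv prod.inject if_conj0 sum_if_const sum.delta sum.delta' finite UNIV_I if_True)

lemma pXZ_eq: "massXZ P (x,z) = (\<Sum>y\<in>UNIV. pmf P (x,y,z))"
  unfolding massXZ_def pmf_map_finite sum_UNIV_triple
  by (simp only: case_prod_conv prod.inject if_conj0 sum_if_const sum.delta sum.delta' finite UNIV_I if_True)

end


lemma mi_decomp:
  fixes q :: "'a::finite \<times> 'b::finite \<Rightarrow> real"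
  assumes nn: "\<And>u. q u \<ge> 0"
  shows "mutual_info_mf q = entropy_mf (marg1 q) - cond_entropy_mf q"
proof -
  have m1: "marg1 q a \<ge> q (a,c)" for a c
    unfolding marg1_def using nn by (intro member_le_sum) auto
  have m2: "marg2 q c \<ge> q (a,c)" for a c
    unfolding marg2_def using nn by (intro member_le_sum) auto
  have t: "(if q (a,c) = 0 then 0 else q (a,c) * log 2 (q (a,c) / (marg1 q a * marg2 q c)))
     = (if q (a,c) = 0 then 0 else q (a,c) * log 2 (q (a,c) / marg2 q c)) - q (a,c) * log 2 (marg1 q a)" for a c
  proof (cases "q (a,c) = 0")
    case False
    then have "q (a,c) > 0" using nn[of "(a,c)"] by linarith
    with m1[of a c] m2[of a c] have "marg1 q a > 0" "marg2 q c > 0" by linarith+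
    with \<open>q (a,c) > 0\<close> show ?thesis
      by (simp add: log_divide log_mult algebra_simps)
  qed simp
  have e: "(\<Sum>(a,c)\<in>UNIV. q (a,c) * log 2 (marg1 q a)) = (\<Sum>a\<in>UNIV. if marg1 q a = 0 then 0 else marg1 q a * log 2 (marg1 q a))"
    unfolding sum_UNIV_pair marg1_def by (intro sum.cong refl) (simp add: sum_distrib_right[symmetric])
  show ?thesis
    unfolding mutual_info_mf_def cond_entropy_mf_def entropy_mf_def
    using e by (simp add: t case_prod_beta' sum_subtractf)
qed


context
  fixes P :: "('x::finite \<times> 'y::finite \<times> 'z::finite) pmf"
begin

lemma pYZ_le_pZ: "probYZ P y z \<le> probZ P z"
  unfolding pYZ_eq pZ_eq
  by (intro sum_mono member_le_sum) auto

lemma pYZ_le_pY: "probYZ P y z \<le> probY P y"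
  unfolding pYZ_eq pY_eq
  by (intro sum_mono member_le_sum) auto

lemma pXZ_le_pZ: "massXZ P (x,z) \<le> probZ P z"
  unfolding pXZ_eq pZ_eq
  by (intro member_le_sum) (auto intro: sum_nonneg)

lemma sum_pYZ: "(\<Sum>y\<in>UNIV. probYZ P y z) = probZ P z"
  unfolding pYZ_eq pZ_eq by (rule sum.swap)

lemma sum_pXZ: "(\<Sum>x\<in>UNIV. massXZ P (x,z)) = probZ P z"
  unfolding pXZ_eq pZ_eq by simp

lemma pYZ_nn: "probYZ P y z \<ge> 0" unfolding probYZ_def by simp
lemma pY_nn: "probY P y \<ge> 0" unfolding probY_def by simp
lemma pZ_nn: "probZ P z \<ge> 0" unfolding probZ_def by simp
lemma pXZ_nn: "massXZ P (x,z) \<ge> 0" unfolding massXZ_def by simp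

lemma c_nn: "condZ_given_Y P z y \<ge> 0"
  unfolding condZ_given_Y_def using pYZ_nn pY_nn by simp

lemma c_zero: "probZ P z = 0 \<Longrightarrow> condZ_given_Y P z y = 0"
  unfolding condZ_given_Y_def using pYZ_le_pZ[of y z] pYZ_nn[of y z] by simp

lemma massAC_eq: "massAC P y (x,z) = massXZ P (x,z) * condZ_given_Y P z y / probZ P z"
  unfolding massAC_def tripleABC_def pXZ_eq
  by (cases "probZ P z = 0") (simp_all add: sum_divide_distrib[symmetric] sum_distrib_right[symmetric])

lemma massAC_nn: "massAC P y u \<ge> 0"
proof -
  obtain x z where u: "u = (x,z)" by (cases u)
  show ?thesis unfolding u massAC_eq
    using pXZ_nn[of x z] c_nn[of z y] pZ_nn[of z] by simp
qed

lemma marg1_AC: "marg1 (massAC P y) = massA P y"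
  unfolding marg1_def massA_def massAC_def by (rule ext, simp only: case_prod_conv, rule sum.swap)

lemma marg2_AC: "marg2 (massAC P y) z = condZ_given_Y P z y"
proof -
  have "marg2 (massAC P y) z = probZ P z * condZ_given_Y P z y / probZ P z"
    unfolding marg2_def massAC_eq
    by (simp add: sum_divide_distrib[symmetric] sum_distrib_right[symmetric] sum_pXZ)
  then show ?thesis using c_zero[of z y] by (cases "probZ P z = 0") auto
qed

definition LL :: "'x \<Rightarrow> 'z \<Rightarrow> real" where
  "LL x z = (if massXZ P (x,z) = 0 \<or> probZ P z = 0 then 0 else log 2 (massXZ P (x,z) / probZ P z))"

lemma term_AC:
  "(if massAC P y (x,z) = 0 then 0 else massAC P y (x,z) * log 2 (massAC P y (x,z) / marg2 (massAC P y) z))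
   = massXZ P (x,z) * condZ_given_Y P z y / probZ P z * LL x z"
proof (cases "massAC P y (x,z) = 0")
  case True then show ?thesis by (simp add: massAC_eq del: massAC_def) blast
next
  case False
  then have h: "massXZ P (x,z) \<noteq> 0" "condZ_given_Y P z y \<noteq> 0" "probZ P z \<noteq> 0"
    by (auto simp: massAC_eq)
  then show ?thesis using False unfolding marg2_AC LL_def by (simp add: massAC_eq)
qed

lemma cond_AC: "cond_entropy_mf (massAC P y) =
   - (\<Sum>x\<in>UNIV. \<Sum>z\<in>UNIV. massXZ P (x,z) * condZ_given_Y P z y / probZ P z * LL x z)"
  unfolding cond_entropy_mf_def
  by (simp add: sum_UNIV_pair term_AC del: massAC_def)

lemma cond_XZ: "cond_entropy_mf (massXZ P) = - (\<Sum>x\<in>UNIV. \<Sum>z\<in>UNIV. massXZ P (x,z) * LL x z)"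
proof -
  have m2: "marg2 (massXZ P) z = probZ P z" for z unfolding marg2_def using sum_pXZ by simp
  have t: "(if massXZ P (x,z) = 0 then 0 else massXZ P (x,z) * log 2 (massXZ P (x,z) / marg2 (massXZ P) z))
     = massXZ P (x,z) * LL x z" for x z
    using pXZ_le_pZ[of x z] pXZ_nn[of x z] unfolding m2 LL_def by auto
  show ?thesis unfolding cond_entropy_mf_def sum_UNIV_pair
    by (simp only: t case_prod_conv)
qed

lemma weighted_cond:
  "(\<Sum>y\<in>{y. probY P y > 0}. probY P y * cond_entropy_mf (massAC P y)) = cond_entropy_mf (massXZ P)"
proof -
  have s1: "(\<Sum>y\<in>{y. probY P y > 0}. probY P y * condZ_given_Y P z y) = probZ P z" for z
  proof -
    have "(\<Sum>y\<in>{y. probY P y > 0}. probY P y * condZ_given_Y P z y) = (\<Sum>y\<in>{y. probY P y > 0}. probYZ P y z)"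
      by (rule sum.cong) (auto simp: condZ_given_Y_def)
    also have "\<dots> = (\<Sum>y\<in>UNIV. probYZ P y z)"
    proof (rule sum.mono_neutral_left)
      show "\<forall>i\<in>UNIV - {y. 0 < probY P y}. probYZ P i z = 0"
        using pYZ_le_pY pYZ_nn pY_nn by (metis DiffD2 antisym mem_Collect_eq order_le_less)
    qed auto
    finally show ?thesis using sum_pYZ by simp
  qed
  have "(\<Sum>y\<in>{y. probY P y > 0}. probY P y * cond_entropy_mf (massAC P y))
     = - (\<Sum>x\<in>UNIV. \<Sum>z\<in>UNIV. massXZ P (x,z) / probZ P z * LL x z *
          (\<Sum>y\<in>{y. probY P y > 0}. probY P y * condZ_given_Y P z y))"
    unfolding cond_AC
    by (simp add: sum_distrib_left sum_distrib_right sum_negf[symmetric] sum.swap[of _ "{y. probY P y > 0}"] algebra_simps)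
  also have "\<dots> = - (\<Sum>x\<in>UNIV. \<Sum>z\<in>UNIV. massXZ P (x,z) * LL x z)"
    unfolding s1 by (intro arg_cong[where f=uminus] sum.cong refl) (auto simp: LL_def)
  finally show ?thesis using cond_XZ by simp
qed

end

theorem corollary1:
  fixes P :: "('x::finite \<times> 'y::finite \<times> 'z::finite) pmf"
  shows "unique_info P =
    (\<Sum>y\<in>{y. probY P y > 0}. probY P y * entropy_mf (massA P y))
      - cond_entropy_mf (massXZ P)"
proof -
  have "unique_info P = (\<Sum>y\<in>{y. probY P y > 0}. probY P y * entropy_mf (massA P y)
       - probY P y * cond_entropy_mf (massAC P y))"
    unfolding unique_info_def
    by (rule sum.cong) (simp_all add: mi_decomp[OF massAC_nn] marg1_AC algebra_simps)
  also have "\<dots> = (\<Sum>y\<in>{y. probY P y > 0}. probY P y * entropy_mf (massA P y)) - cond_entropy_mf (massXZ P)"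
    by (simp add: sum_subtractf weighted_cond)
  finally show ?thesis .
qed

end
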